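(* Let $G$ be a proper interval graph with a proper vertex ordering $<$. Let $e_1,e_2,e_3$ be distinct edges of $G$ such that $l(e_1)\leq l(e_2)\leq l(e_3)$ and $r(e_1)\leq r(e_2)\leq r(e_3)$. If $\{e_1,e_3\}$ is not a uniquely restricted matching in $G$, then neither $\{e_1,e_2\}$ nor $\{e_2,e_3\}$ is a uniquely restricted matching in $G$.
   Context: Graphs are finite, simple, undirected. A proper interval graph is a graph with an interval representation (closed real intervals, adjacency iff intersection for distinct vertices) in which no interval strictly contains another. An ordering $<$ of $V(G)$ is a proper vertex ordering if for all $u<v<w$, $uw\in E(G)$ implies $uv,vw\in E(G)$; $\leq$ denotes $<$ or equality. For an edge $e=uv$, $l(e)=\min_<\{u,v\}$ and $r(e)=\max_<\{u,v\}$. A matching is a set of pairwise vertex-disjoint edges; it is uniquely restricted if no other matching of $G$ matches exactly the same vertex set (a set of edges that is not a matching is in particular not a uniquely restricted matching). *)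

theory Defs
  imports Complex_Main
begin

definition graph :: "'a set \<Rightarrow> 'a set set \<Rightarrow> bool" where
  "graph V E \<longleftrightarrow> finite V \<and> (\<forall>e\<in>E. \<exists>u v. u \<noteq> v \<and> u \<in> V \<and> v \<in> V \<and> e = {u, v})"

definition ivl :: "real \<times> real \<Rightarrow> real set" where
  "ivl p = {fst p .. snd p}"

definition proper_interval_graph :: "'a set \<Rightarrow> 'a set set \<Rightarrow> bool" where
  "proper_interval_graph V E \<longleftrightarrow> graph V E \<and>
     (\<exists>f :: 'a \<Rightarrow> real \<times> real.
        (\<forall>v\<in>V. fst (f v) \<le> snd (f v)) \<and>
        (\<forall>u\<in>V. \<forall>v\<in>V. u \<noteq> v \<longrightarrow> ({u, v} \<in> E \<longleftrightarrow> ivl (f u) \<inter> ivl (f v) \<noteq> {})) \<and>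
        (\<forall>u\<in>V. \<forall>v\<in>V. \<not> (ivl (f u) \<subset> ivl (f v))))"

definition proper_vertex_ordering :: "'a set \<Rightarrow> 'a set set \<Rightarrow> ('a \<times> 'a) set \<Rightarrow> bool" where
  "proper_vertex_ordering V E lt \<longleftrightarrow> lt \<subseteq> V \<times> V \<and> strict_linear_order_on V lt \<and>
     (\<forall>u v w. (u, v) \<in> lt \<and> (v, w) \<in> lt \<and> {u, w} \<in> E \<longrightarrow> {u, v} \<in> E \<and> {v, w} \<in> E)"

definition ole :: "('a \<times> 'a) set \<Rightarrow> 'a \<Rightarrow> 'a \<Rightarrow> bool" where
  "ole lt x y \<longleftrightarrow> (x, y) \<in> lt \<or> x = y"

definition lend :: "('a \<times> 'a) set \<Rightarrow> 'a set \<Rightarrow> 'a" where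
  "lend lt e = (THE u. u \<in> e \<and> (\<forall>w\<in>e. ole lt u w))"

definition rend :: "('a \<times> 'a) set \<Rightarrow> 'a set \<Rightarrow> 'a" where
  "rend lt e = (THE u. u \<in> e \<and> (\<forall>w\<in>e. ole lt w u))"

definition matching :: "'a set set \<Rightarrow> 'a set set \<Rightarrow> bool" where
  "matching E M \<longleftrightarrow> M \<subseteq> E \<and> (\<forall>e\<in>M. \<forall>f\<in>M. e \<noteq> f \<longrightarrow> e \<inter> f = {})"

definition uniquely_restricted :: "'a set set \<Rightarrow> 'a set set \<Rightarrow> bool" where
  "uniquely_restricted E M \<longleftrightarrow> matching E M \<and>
     (\<forall>M'. matching E M' \<and> \<Union>M' = \<Union>M \<longrightarrow> M' = M)"

end

theory Submission
  imports Defs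
begin

lemma ends:
  assumes "trans lt" "irrefl lt" "(u, v) \<in> lt"
  shows "lend lt {u, v} = u \<and> rend lt {u, v} = v"
proof -
  have nvu: "(v, u) \<notin> lt" using assms by (meson irrefl_def transD)
  have "lend lt {u, v} = u" unfolding lend_def
    by (rule the_equality) (use assms nvu in \<open>auto simp: ole_def\<close>)
  moreover have "rend lt {u, v} = v" unfolding rend_def
    by (rule the_equality) (use assms nvu in \<open>auto simp: ole_def\<close>)
  ultimately show ?thesis by simp
qed

lemma edge_form:
  assumes "graph V E" "lt \<subseteq> V \<times> V" "strict_linear_order_on V lt" "e \<in> E"
  shows "\<exists>a b. e = {a, b} \<and> (a, b) \<in> lt"
proof -
  obtain u v where "u \<noteq> v" "u \<in> V" "v \<in> V" "e = {u, v}"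
    using assms(1,4) unfolding graph_def by blast
  then have "(u, v) \<in> lt \<or> (v, u) \<in> lt" using assms(3) unfolding strict_linear_order_on_def total_on_def
    by blast
  then show ?thesis using \<open>e = {u, v}\<close> by (metis insert_commute)
qed

lemma notUR_inter:
  assumes "e \<noteq> f" "e \<inter> f \<noteq> {}"
  shows "\<not> uniquely_restricted E {e, f}"
proof -
  have "\<not> matching E {e, f}" using assms unfolding matching_def by blast
  thus ?thesis unfolding uniquely_restricted_def by blast
qed

lemma notUR_swap:
  assumes "{a,b} \<in> E" "{c,d} \<in> E" "{a,c} \<in> E" "{b,d} \<in> E"
    "a \<noteq> b" "a \<noteq> c" "a \<noteq> d" "b \<noteq> c" "b \<noteq> d" "c \<noteq> d"
  shows "\<not> uniquely_restricted E {{a,b}, {c,d}}"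
proof
  assume u: "uniquely_restricted E {{a,b}, {c,d}}"
  have dj: "{a,c} \<inter> {b,d} = {}" "{b,d} \<inter> {a,c} = {}" using assms by simp_all
  have "matching E {{a,c},{b,d}}" unfolding matching_def
  proof (intro conjI ballI impI)
    show "{{a,c},{b,d}} \<subseteq> E" using assms(3,4) by simp
  next
    fix e f assume "e \<in> {{a,c},{b,d}}" "f \<in> {{a,c},{b,d}}" "e \<noteq> f"
    thus "e \<inter> f = {}" using dj by (elim insertE emptyE) simp_all
  qed
  moreover have "\<Union>{{a,c},{b,d}} = \<Union>{{a,b}, {c,d}}" by auto
  ultimately have "{{a,c},{b,d}} = {{a,b}, {c,d}}" using u unfolding uniquely_restricted_def by (elim conjE allE) (erule mp, rule conjI)
  hence "{a,c} \<in> {{a,b}, {c,d}}" by (metis insertI1)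
  hence "{a,c} = {a,b} \<or> {a,c} = {c,d}" by simp
  thus False using assms by (simp add: doubleton_eq_iff)
qed

lemma four:
  assumes g: "\<forall>e\<in>E. \<exists>u v. u \<noteq> v \<and> e = {u, v}"
    and m: "matching E M" and un: "\<Union>M = {a,b,c,d}" and ne: "M \<noteq> {{a,b},{c,d}}"
    and d: "a \<noteq> b" "a \<noteq> c" "a \<noteq> d" "b \<noteq> c" "b \<noteq> d" "c \<noteq> d"
  shows "({a,c}\<in>E \<and> {b,d}\<in>E) \<or> ({a,d}\<in>E \<and> {b,c}\<in>E)"
proof -
  have sub: "M \<subseteq> E" and dis: "\<And>e f. e \<in> M \<Longrightarrow> f \<in> M \<Longrightarrow> e \<noteq> f \<Longrightarrow> e \<inter> f = {}"
    using m unfolding matching_def by auto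
  have two: "\<And>e. e \<in> M \<Longrightarrow> \<exists>u v. u \<noteq> v \<and> e = {u, v}" using g sub by blast
  obtain g1 where g1: "g1 \<in> M" "a \<in> g1" using un by blast
  obtain x where x: "g1 = {a, x}" "x \<noteq> a" using two[OF g1(1)] g1(2) by (metis insert_commute insertE singletonD)
  have xin: "x \<in> {b,c,d}" using x g1 un d by blast
  obtain g2 where g2: "g2 \<in> M" "b \<in> g2" using un by blast
  obtain y where y: "g2 = {b, y}" "y \<noteq> b" using two[OF g2(1)] g2(2) by (metis insert_commute insertE singletonD)
  have yin: "y \<in> {a,c,d}" using y g2 un d by blast
  obtain g3 where g3: "g3 \<in> M" "c \<in> g3" using un by blast
  obtain z where z: "g3 = {c, z}" "z \<noteq> c" using two[OF g3(1)] g3(2) by (metis insert_commute insertE singletonD)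
  have zin: "z \<in> {a,b,d}" using z g3 un d by blast
  show ?thesis
  proof (cases "x = b")
    case True
    have "g3 \<noteq> g1" using g1 g3 x True d z by auto
    hence "g3 \<inter> g1 = {}" using dis g1 g3 by blast
    hence zd: "z = d" using zin x z True by auto
    have "M = {{a,b},{c,d}}"
    proof
      show "{{a,b},{c,d}} \<subseteq> M" using g1 g3 x z True zd by auto
      show "M \<subseteq> {{a,b},{c,d}}"
      proof
        fix k assume k: "k \<in> M"
        obtain p q where pq: "p \<noteq> q" "k = {p,q}" using two[OF k] by blast
        show "k \<in> {{a,b},{c,d}}"
        proof (rule ccontr)
          assume "k \<notin> {{a,b},{c,d}}"
          hence "k \<inter> g1 = {}" "k \<inter> g3 = {}" using dis k g1 g3 x z True zd by auto
          moreover have "p \<in> {a,b,c,d}" using un k pq by blast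
          ultimately show False using x z True zd pq by auto
        qed
      qed
    qed
    thus ?thesis using ne by blast
  next
    case False
    have "g2 \<noteq> g1" using False x y g1 g2 d by auto
    hence "g2 \<inter> g1 = {}" using dis g1 g2 by blast
    hence "y \<noteq> a" "y \<noteq> x" using x y by auto
    hence xy: "(x = c \<and> y = d) \<or> (x = d \<and> y = c)" using False xin yin by blast
    have "{a,x} \<in> E" "{b,y} \<in> E" using x y g1 g2 sub by auto
    thus ?thesis using xy by blast
  qed
qed

theorem lemma4:
  fixes V :: "'a set" and E :: "'a set set" and lt :: "('a \<times> 'a) set"
  assumes "proper_interval_graph V E"
    and "proper_vertex_ordering V E lt"
    and "e1 \<in> E" and "e2 \<in> E" and "e3 \<in> E"
    and "e1 \<noteq> e2" and "e1 \<noteq> e3" and "e2 \<noteq> e3"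
    and "ole lt (lend lt e1) (lend lt e2)" and "ole lt (lend lt e2) (lend lt e3)"
    and "ole lt (rend lt e1) (rend lt e2)" and "ole lt (rend lt e2) (rend lt e3)"
    and "\<not> uniquely_restricted E {e1, e3}"
  shows "\<not> uniquely_restricted E {e1, e2} \<and> \<not> uniquely_restricted E {e2, e3}"
proof -
  have gr: "graph V E" using assms(1) unfolding proper_interval_graph_def by blast
  have sub: "lt \<subseteq> V \<times> V" and slo: "strict_linear_order_on V lt"
    and P: "\<And>u v w. (u, v) \<in> lt \<Longrightarrow> (v, w) \<in> lt \<Longrightarrow> {u, w} \<in> E \<Longrightarrow> {u, v} \<in> E \<and> {v, w} \<in> E"
    using assms(2) unfolding proper_vertex_ordering_def by blast+
  have tr: "trans lt" and ir: "irrefl lt" using slo unfolding strict_linear_order_on_def by auto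
  have g2: "\<forall>e\<in>E. \<exists>u v. u \<noteq> v \<and> e = {u, v}" using gr unfolding graph_def by blast
  obtain a1 b1 where e1: "e1 = {a1, b1}" "(a1, b1) \<in> lt" using edge_form[OF gr sub slo assms(3)] by blast
  obtain a2 b2 where e2: "e2 = {a2, b2}" "(a2, b2) \<in> lt" using edge_form[OF gr sub slo assms(4)] by blast
  obtain a3 b3 where e3: "e3 = {a3, b3}" "(a3, b3) \<in> lt" using edge_form[OF gr sub slo assms(5)] by blast
  have l1: "lend lt e1 = a1" "rend lt e1 = b1" using ends[OF tr ir e1(2)] e1 by auto
  have l2: "lend lt e2 = a2" "rend lt e2 = b2" using ends[OF tr ir e2(2)] e2 by auto
  have l3: "lend lt e3 = a3" "rend lt e3 = b3" using ends[OF tr ir e3(2)] e3 by auto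
  have o: "(a1,a2) \<in> lt \<or> a1 = a2" "(a2,a3) \<in> lt \<or> a2 = a3"
    "(b1,b2) \<in> lt \<or> b1 = b2" "(b2,b3) \<in> lt \<or> b2 = b3"
    using assms(9-12) unfolding l1 l2 l3 ole_def by auto
  have irr: "\<And>x. (x,x) \<notin> lt" using ir by (simp add: irrefl_def)
  have trr: "\<And>x y z. (x,y) \<in> lt \<Longrightarrow> (y,z) \<in> lt \<Longrightarrow> (x,z) \<in> lt" using tr by (meson transD)
  have E1: "{a1,b1} \<in> E" "{a2,b2} \<in> E" "{a3,b3} \<in> E" using assms(3-5) e1 e2 e3 by auto
  have key: "\<And>a b c d. {a,b} \<in> E \<Longrightarrow> {c,d} \<in> E \<Longrightarrow> (a,b) \<in> lt \<Longrightarrow> (c,d) \<in> lt \<Longrightarrow> {a,b} \<noteq> {c,d} \<Longrightarrow>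
     {a,b} \<inter> {c,d} \<noteq> {} \<or> ({a,c} \<in> E \<and> {b,d} \<in> E) \<Longrightarrow> \<not> uniquely_restricted E {{a,b},{c,d}}"
  proof -
    fix a b c d assume h: "{a,b} \<in> E" "{c,d} \<in> E" "(a,b) \<in> lt" "(c,d) \<in> lt" "{a,b} \<noteq> {c,d}"
      "{a,b} \<inter> {c,d} \<noteq> {} \<or> ({a,c} \<in> E \<and> {b,d} \<in> E)"
    show "\<not> uniquely_restricted E {{a,b},{c,d}}"
    proof (cases "{a,b} \<inter> {c,d} = {}")
      case True
      then show ?thesis using h notUR_swap[of a b E c d] irr by auto
    next
      case False
      then show ?thesis using notUR_inter[OF h(5)] by blast
    qed
  qed
  have c13: "{a1,b1} \<inter> {a3,b3} \<noteq> {} \<or> ({a1,a3} \<in> E \<and> {b1,b3} \<in> E)"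
  proof (rule ccontr)
    assume nc: "\<not> ?thesis"
    hence dj: "{a1,b1} \<inter> {a3,b3} = {}" by blast
    have dd: "a1 \<noteq> b1" "a1 \<noteq> a3" "a1 \<noteq> b3" "b1 \<noteq> a3" "b1 \<noteq> b3" "a3 \<noteq> b3"
      using dj e1 e3 irr by auto
    have "matching E {e1,e3}" using dj e1 e3 assms(3,5) unfolding matching_def by auto
    then obtain M where M: "matching E M" "\<Union>M = \<Union>{e1,e3}" "M \<noteq> {e1,e3}"
      using assms(13) unfolding uniquely_restricted_def by blast
    have "({a1,a3}\<in>E \<and> {b1,b3}\<in>E) \<or> ({a1,b3}\<in>E \<and> {b1,a3}\<in>E)"
      by (rule four[OF g2 M(1) _ _ dd]) (use M e1 e3 in auto)
    moreover have "{a1,b3}\<in>E \<Longrightarrow> {b1,a3}\<in>E \<Longrightarrow> {a1,a3}\<in>E \<and> {b1,b3}\<in>E"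
    proof -
      assume h: "{a1,b3}\<in>E"
      have "(a1,a3) \<in> lt" using o(1,2) dd trr by blast
      hence i1: "{a1,a3}\<in>E" using P[OF _ e3(2) h] by blast
      have "(b1,b3) \<in> lt" using o(3,4) dd trr by blast
      hence "{b1,b3}\<in>E" using P[OF e1(2) _ h] by blast
      with i1 show ?thesis by blast
    qed
    ultimately show False using nc by blast
  qed
  have asym: "\<And>x y. (x,y) \<in> lt \<Longrightarrow> (y,x) \<in> lt \<Longrightarrow> False" using trr irr by blast
  have G1: "{a1,b1} \<inter> {a2,b2} \<noteq> {} \<or> ({a1,a2} \<in> E \<and> {b1,b2} \<in> E)"
  proof (cases "{a1,b1} \<inter> {a2,b2} = {}")
    case False thus ?thesis by blast
  next
    case True
    hence dj: "a1 \<noteq> a2" "b1 \<noteq> b2" "a1 \<noteq> b2" "b1 \<noteq> a2" by auto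
    have la: "(a1,a2) \<in> lt" "(b1,b2) \<in> lt" using o dj by auto
    have BB: "{a1,a2} \<in> E \<and> {b1,b2} \<in> E"
    proof (cases "{a1,a3} \<in> E \<and> {b1,b3} \<in> E")
      case True
      have "{a1,a2} \<in> E"
      proof (cases "a2 = a3")
        case True thus ?thesis using \<open>{a1,a3} \<in> E \<and> {b1,b3} \<in> E\<close> by simp
      next
        case False thus ?thesis using o(2) P[OF la(1), of a3] True by blast
      qed
      moreover have "{b1,b2} \<in> E"
      proof (cases "b2 = b3")
        case True thus ?thesis using \<open>{a1,a3} \<in> E \<and> {b1,b3} \<in> E\<close> by simp
      next
        case False thus ?thesis using o(4) P[OF la(2), of b3] True by blast
      qed
      ultimately show ?thesis by blast
    next
      case False
      hence "{a1,b1} \<inter> {a3,b3} \<noteq> {}" using c13 by blast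
      hence "a1 = a3 \<or> b1 = b3 \<or> a1 = b3 \<or> b1 = a3" by auto
      moreover have "a1 \<noteq> a3" using o(2) la(1) asym by blast
      moreover have "b1 \<noteq> b3" using o(4) la(2) asym by blast
      moreover have "a1 \<noteq> b3" using o(3,4) e1(2) asym trr by blast
      ultimately have b: "b1 = a3" by blast
      have "(a2,b1) \<in> lt" using o(2) b dj by auto
      thus ?thesis using P[OF la(1) _ E1(1)] P[OF _ la(2) E1(2)] by blast
    qed
    thus ?thesis by blast
  qed
  have G2: "{a2,b2} \<inter> {a3,b3} \<noteq> {} \<or> ({a2,a3} \<in> E \<and> {b2,b3} \<in> E)"
  proof (cases "{a2,b2} \<inter> {a3,b3} = {}")
    case False thus ?thesis by blast
  next
    case True
    hence dj: "a2 \<noteq> a3" "b2 \<noteq> b3" "a2 \<noteq> b3" "b2 \<noteq> a3" by auto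
    have la: "(a2,a3) \<in> lt" "(b2,b3) \<in> lt" using o dj by auto
    have BB: "{a2,a3} \<in> E \<and> {b2,b3} \<in> E"
    proof (cases "{a1,a3} \<in> E \<and> {b1,b3} \<in> E")
      case True
      have "{a2,a3} \<in> E"
      proof (cases "a1 = a2")
        case True thus ?thesis using \<open>{a1,a3} \<in> E \<and> {b1,b3} \<in> E\<close> by simp
      next
        case False thus ?thesis using o(1) P[OF _ la(1), of a1] True by blast
      qed
      moreover have "{b2,b3} \<in> E"
      proof (cases "b1 = b2")
        case True thus ?thesis using \<open>{a1,a3} \<in> E \<and> {b1,b3} \<in> E\<close> by simp
      next
        case False thus ?thesis using o(3) P[OF _ la(2), of b1] True by blast
      qed
      ultimately show ?thesis by blast
    next
      case False
      hence "{a1,b1} \<inter> {a3,b3} \<noteq> {}" using c13 by blast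
      hence "a1 = a3 \<or> b1 = b3 \<or> a1 = b3 \<or> b1 = a3" by auto
      moreover have "a1 \<noteq> a3" using o(1) la(1) asym trr by blast
      moreover have "b1 \<noteq> b3" using o(3) la(2) asym trr by blast
      moreover have "a1 \<noteq> b3" using o(3,4) e1(2) asym trr by blast
      ultimately have b: "b1 = a3" by blast
      have "(a3,b2) \<in> lt" using o(3) b dj by auto
      thus ?thesis using P[OF la(1) _ E1(2)] P[OF _ la(2) E1(3)] by blast
    qed
    thus ?thesis by blast
  qed
  show ?thesis
    using key[OF E1(1) E1(2) e1(2) e2(2)] key[OF E1(2) E1(3) e2(2) e3(2)] G1 G2 assms(6,8) e1 e2 e3
    by auto
qed

end
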